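(* Assume $a^1_K:=\langle[H_1,[H_0,H_1]]\varphi_1,\varphi_K\rangle\neq0$. There exists $T^*>0$ such that for every $T\in(0,T^* )$ and every real $s\in L^2(0,T)$, $-\operatorname{sign}(a^1_K)\,Q(s)\ge\frac{|a^1_K|}{8}\int_0^Ts(t)^2dt$, where $$Q(s)=-\frac{a^1_K}{2}\int_0^Ts(t)^2\cos[(\lambda_K-\lambda_1)(t-T)]dt+\sum_{j=1}^p\langle[H_0,H_1]\varphi_1,\varphi_j\rangle\langle[H_0,H_1]\varphi_j,\varphi_K\rangle\int_0^Ts(t)\int_0^ts(\tau)\sin\big(\lambda_j(\tau-t)+\lambda_K(t-T)+\lambda_1(T-\tau)\big)d\tau dt.$$
   Context: $H_0,H_1$ real symmetric $p\times p$ matrices, $[M,N]=MN-NM$, $(\varphi_j)$ a real orthonormal eigenbasis of $H_0$ with eigenvalues $\lambda_j$, $K\in\{1,\dots,p\}$, $\langle\cdot,\cdot\rangle$ the Hermitian product of $\mathbb{C}^p$. *)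

theory Defs
  imports "HOL-Analysis.Analysis"
begin

definition commut :: "real^'n^'n \<Rightarrow> real^'n^'n \<Rightarrow> real^'n^'n" where
  "commut M N = M ** N - N ** M"

definition Qform :: "real^'n^'n \<Rightarrow> real^'n^'n \<Rightarrow> (nat \<Rightarrow> real^'n) \<Rightarrow> (nat \<Rightarrow> real)
    \<Rightarrow> nat \<Rightarrow> real \<Rightarrow> (real \<Rightarrow> real) \<Rightarrow> real" where
  "Qform H0 H1 \<phi> lam K T s =
     (let a = (commut H1 (commut H0 H1) *v \<phi> 1) \<bullet> \<phi> K;
          B = commut H0 H1 in
      - (a / 2) * (LINT t:{0..T}|lborel. (s t)^2 * cos ((lam K - lam 1) * (t - T)))
      + (\<Sum>j=1..CARD('n). ((B *v \<phi> 1) \<bullet> \<phi> j) * ((B *v \<phi> j) \<bullet> \<phi> K) *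
          (LINT t:{0..T}|lborel. s t * (LINT \<tau>:{0..t}|lborel.
               s \<tau> * sin (lam j * (\<tau> - t) + lam K * (t - T) + lam 1 * (T - \<tau>))))))"

end

theory Submission imports Defs begin

lemma lint_abs_bound:
  fixes f :: "real \<Rightarrow> real"
  shows "\<bar>LINT x:A|M. f x\<bar> \<le> (LINT x:A|M. \<bar>f x\<bar>)"
  unfolding set_lebesgue_integral_def
  using integral_abs_bound[of M "\<lambda>x. indicator A x *\<^sub>R f x"]
  by (simp add: abs_mult)

lemma lint_mono_dom:
  fixes f g :: "real \<Rightarrow> real"
  assumes g: "set_integrable M A g" and f0: "\<And>x. x \<in> A \<Longrightarrow> 0 \<le> f x"
    and fg: "\<And>x. x \<in> A \<Longrightarrow> f x \<le> g x"
  shows "(LINT x:A|M. f x) \<le> (LINT x:A|M. g x)"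
proof (cases "set_integrable M A f")
  case True
  then show ?thesis using set_integral_mono[OF True g fg] by simp
next
  case False
  then have "(LINT x:A|M. f x) = 0"
    unfolding set_integrable_def set_lebesgue_integral_def
    by (simp add: not_integrable_integral_eq)
  moreover have "0 \<le> (LINT x:A|M. g x)"
    unfolding set_lebesgue_integral_def
    by (rule Bochner_Integration.integral_nonneg) (insert f0 fg, force simp: indicator_def)
  ultimately show ?thesis by simp
qed

lemma lint_nonneg:
  fixes f :: "real \<Rightarrow> real"
  assumes f0: "\<And>x. x \<in> A \<Longrightarrow> 0 \<le> f x"
  shows "0 \<le> (LINT x:A|M. f x)"
  unfolding set_lebesgue_integral_def
  by (rule Bochner_Integration.integral_nonneg) (insert f0, force simp: indicator_def)

lemma abs_le_sq1: "\<bar>y::real\<bar> \<le> y^2 + 1"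
proof (cases "\<bar>y\<bar> \<le> 1")
  case True then show ?thesis by (smt (verit) zero_le_power2)
next
  case False
  have "\<bar>y\<bar> * 1 \<le> \<bar>y\<bar> * \<bar>y\<bar>" using False by (intro mult_left_mono) auto
  also have "\<dots> = y^2" by (simp add: power2_eq_square abs_mult_self_eq)
  finally show ?thesis by (smt (verit) zero_le_power2)
qed

context
  fixes s :: "real \<Rightarrow> real" and T :: real
  assumes T: "0 < T" and meas: "set_borel_measurable lborel {0..T} s"
    and sq: "set_integrable lborel {0..T} (\<lambda>t. (s t)^2)"
begin

lemma int_one: "set_integrable lborel {0..T} (\<lambda>t. c::real)"
  unfolding set_integrable_def
  by (intro integrable_scaleR_left integrable_real_indicator) (auto simp: emeasure_lborel_Icc_eq)

lemma int_abs: "set_integrable lborel {0..T} (\<lambda>t. \<bar>s t\<bar>)"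
proof (rule set_integrable_bound[of _ _ "\<lambda>t. (s t)^2 + 1"])
  show "set_integrable lborel {0..T} (\<lambda>t. (s t)\<^sup>2 + 1)"
    using sq int_one[of 1] by (rule set_integral_add)
  show "set_borel_measurable lborel {0..T} (\<lambda>t. \<bar>s t\<bar>)"
    using meas unfolding set_borel_measurable_def
    by (metis (no_types, lifting) borel_measurable_abs abs_mult abs_indicator ext real_scaleR_def) 
  show "AE x in lborel. x \<in> {0..T} \<longrightarrow> norm \<bar>s x\<bar> \<le> norm ((s x)\<^sup>2 + 1)"
    by (intro AE_I2 impI) (simp add: abs_le_sq1)
qed

lemma const_int: "(LINT t:{0..T}|lborel. (c::real)) = c * T"
  using T by (simp add: set_integral_const)

lemma cs: "(LINT t:{0..T}|lborel. \<bar>s t\<bar>)^2 \<le> T * (LINT t:{0..T}|lborel. (s t)^2)"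
proof -
  define A where "A = (LINT t:{0..T}|lborel. \<bar>s t\<bar>)"
  define S where "S = (LINT t:{0..T}|lborel. (s t)^2)"
  have A0: "0 \<le> A" unfolding A_def by (rule lint_nonneg) simp
  have S0: "0 \<le> S" unfolding S_def by (rule lint_nonneg) simp
  have key: "A \<le> S / (2*c) + c * T / 2" if c: "c > 0" for c
  proof -
    have "A \<le> (LINT t:{0..T}|lborel. (s t)^2 / (2*c) + c/2)"
      unfolding A_def
    proof (rule set_integral_mono[OF int_abs])
      show "set_integrable lborel {0..T} (\<lambda>t. (s t)\<^sup>2 / (2 * c) + c / 2)"
        by (rule set_integral_add) (use sq int_one in auto)
      fix t
      have "0 \<le> (\<bar>s t\<bar> - c)^2" by simp
      then have "2*c*\<bar>s t\<bar> \<le> (s t)^2 + c^2" by (simp add: power2_eq_square algebra_simps)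
      then show "\<bar>s t\<bar> \<le> (s t)\<^sup>2 / (2 * c) + c / 2" using c
        by (simp add: field_simps power2_eq_square)
    qed
    also have "\<dots> = S / (2*c) + c * T / 2"
      unfolding S_def
      by (subst set_integral_add) (use sq int_one const_int in auto)
    finally show ?thesis .
  qed
  show ?thesis
  proof (cases "S = 0")
    case True
    have "A \<le> 0"
    proof (rule field_le_epsilon)
      fix e :: real assume e: "e > 0"
      have "A \<le> S / (2*(2*e/T)) + (2*e/T) * T / 2" using key[of "2*e/T"] e T by simp
      then show "A \<le> 0 + e" using True T by simp
    qed
    then show ?thesis using A0 True unfolding A_def S_def by simp
  next
    case False
    with S0 have Sp: "S > 0" by simp
    define c where "c = sqrt (S/T)"
    have c: "c > 0" unfolding c_def using Sp T by simp
    have "A \<le> S / (2*c) + c * T / 2" by (rule key[OF c])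
    also have "\<dots> = sqrt (S*T)"
    proof -
      have cc: "c*c = S/T" unfolding c_def using Sp T by simp
      have "S / (2*c) + c * T / 2 = (S + c*c*T) / (2*c)" using c by (simp add: field_simps)
      also have "\<dots> = S / c" using cc T by (simp add: field_simps)
      also have "\<dots> = sqrt (S*T)" unfolding c_def using Sp T
        by (simp add: real_sqrt_divide field_simps real_sqrt_mult)
      finally show ?thesis .
    qed
    finally have "A^2 \<le> (sqrt (S*T))^2" using A0 by (simp add: power_mono)
    then show ?thesis using Sp T unfolding A_def S_def by (simp add: mult.commute)
  qed
qed

lemma int_sub: "t \<le> T \<Longrightarrow> (LINT x:{0..t}|lborel. \<bar>s x\<bar>) \<le> (LINT x:{0..T}|lborel. \<bar>s x\<bar>)"
proof -
  assume tT: "t \<le> T"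
  have i1: "set_integrable lborel {0..t} (\<lambda>x. \<bar>s x\<bar>)"
    by (rule set_integrable_subset[OF int_abs]) (use tT in auto)
  show ?thesis
    unfolding set_lebesgue_integral_def
    by (rule integral_mono) (use i1 int_abs tT in \<open>auto simp: set_integrable_def indicator_def\<close>)
qed

lemma inner_bound:
  assumes t: "t \<in> {0..T}"
  shows "\<bar>LINT x:{0..t}|lborel. s x * sin (g x)\<bar> \<le> (LINT x:{0..T}|lborel. \<bar>s x\<bar>)"
proof -
  have i1: "set_integrable lborel {0..t} (\<lambda>x. \<bar>s x\<bar>)"
    by (rule set_integrable_subset[OF int_abs]) (use t in auto)
  have "\<bar>LINT x:{0..t}|lborel. s x * sin (g x)\<bar> \<le> (LINT x:{0..t}|lborel. \<bar>s x * sin (g x)\<bar>)"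
    by (rule lint_abs_bound)
  also have "\<dots> \<le> (LINT x:{0..t}|lborel. \<bar>s x\<bar>)"
  proof (rule lint_mono_dom[OF i1])
    fix x
    show "0 \<le> \<bar>s x * sin (g x)\<bar>" by simp
    show "\<bar>s x * sin (g x)\<bar> \<le> \<bar>s x\<bar>"
      by (simp add: abs_mult mult_left_le)
  qed
  also have "\<dots> \<le> (LINT x:{0..T}|lborel. \<bar>s x\<bar>)" using t int_sub by auto
  finally show ?thesis .
qed

lemma outer_bound:
  assumes h: "\<And>t. t \<in> {0..T} \<Longrightarrow> \<bar>h t\<bar> \<le> (LINT x:{0..T}|lborel. \<bar>s x\<bar>)"
  shows "\<bar>LINT t:{0..T}|lborel. s t * h t\<bar> \<le> T * (LINT t:{0..T}|lborel. (s t)^2)"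
proof -
  define A where "A = (LINT x:{0..T}|lborel. \<bar>s x\<bar>)"
  have "\<bar>LINT t:{0..T}|lborel. s t * h t\<bar> \<le> (LINT t:{0..T}|lborel. \<bar>s t * h t\<bar>)"
    by (rule lint_abs_bound)
  also have "\<dots> \<le> (LINT t:{0..T}|lborel. A * \<bar>s t\<bar>)"
  proof (rule lint_mono_dom)
    show "set_integrable lborel {0..T} (\<lambda>t. A * \<bar>s t\<bar>)" using int_abs by simp
    fix t assume "t \<in> {0..T}"
    then have "\<bar>h t\<bar> \<le> A" using h A_def by auto
    then show "\<bar>s t * h t\<bar> \<le> A * \<bar>s t\<bar>"
      by (simp add: abs_mult mult.commute mult_right_mono)
  qed simp
  also have "\<dots> = A * A" unfolding A_def by (simp add: set_integral_mult_right)
  also have "\<dots> = A^2" by (simp add: power2_eq_square)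
  also have "\<dots> \<le> T * (LINT t:{0..T}|lborel. (s t)^2)" unfolding A_def by (rule cs)
  finally show ?thesis .
qed

lemma cos_half: "\<bar>x::real\<bar> \<le> 1 \<Longrightarrow> 1/2 \<le> cos x"
proof -
  assume x: "\<bar>x\<bar> \<le> 1"
  have "cos (pi/3) \<le> cos \<bar>x\<bar>"
    by (rule cos_monotone_0_pi_le) (use x pi_gt3 in auto)
  then show ?thesis by (simp add: cos_60)
qed

lemma cos_part:
  assumes w: "\<bar>w\<bar> * T \<le> 1"
  shows "(LINT t:{0..T}|lborel. (s t)^2) / 2 \<le> (LINT t:{0..T}|lborel. (s t)^2 * cos (w * (t - T)))"
proof -
  note [measurable] = meas[unfolded set_borel_measurable_def]
  have eq: "(\<lambda>t. indicator {0..T} t *\<^sub>R ((s t)^2 * cos (w * (t - T)))) =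
     (\<lambda>t. (indicator {0..T} t *\<^sub>R s t)^2 * cos (w * (t - T)))"
    by (auto simp: indicator_def fun_eq_iff)
  have m: "set_borel_measurable lborel {0..T} (\<lambda>t. (s t)^2 * cos (w * (t - T)))"
    unfolding set_borel_measurable_def eq by measurable
  have ig: "set_integrable lborel {0..T} (\<lambda>t. (s t)^2 * cos (w * (t - T)))"
    by (rule set_integrable_bound[OF sq m]) (auto intro!: AE_I2 simp: abs_mult mult_left_le)
  have "(LINT t:{0..T}|lborel. (s t)^2) / 2 = (LINT t:{0..T}|lborel. (s t)^2 / 2)"
    by (simp add: set_integral_divide_zero)
  also have "\<dots> \<le> (LINT t:{0..T}|lborel. (s t)^2 * cos (w * (t - T)))"
  proof (rule set_integral_mono[OF _ ig])
    show "set_integrable lborel {0..T} (\<lambda>t. (s t)\<^sup>2 / 2)" using sq by simp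
    fix t assume t: "t \<in> {0..T}"
    have "\<bar>w * (t - T)\<bar> \<le> \<bar>w\<bar> * T" using t T by (auto simp: abs_mult intro!: mult_left_mono)
    then have "1/2 \<le> cos (w * (t - T))" using w by (intro cos_half) auto
    then show "(s t)\<^sup>2 / 2 \<le> (s t)\<^sup>2 * cos (w * (t - T))"
      using mult_left_mono[of "1/2" "cos (w * (t - T))" "(s t)^2"] by simp
  qed
  finally show ?thesis .
qed

end

theorem lemma2p5:
  fixes H0 H1 :: "real^'n^'n" and \<phi> :: "nat \<Rightarrow> real^'n" and lam :: "nat \<Rightarrow> real" and K :: nat
  assumes symH0: "transpose H0 = H0" and symH1: "transpose H1 = H1"
    and orthonormal: "\<And>i j. i \<in> {1..CARD('n)} \<Longrightarrow> j \<in> {1..CARD('n)} \<Longrightarrow>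
                         \<phi> i \<bullet> \<phi> j = (if i = j then 1 else 0)"
    and eigen: "\<And>j. j \<in> {1..CARD('n)} \<Longrightarrow> H0 *v \<phi> j = lam j *\<^sub>R \<phi> j"
    and K: "K \<in> {1..CARD('n)}"
    and a_nz: "(commut H1 (commut H0 H1) *v \<phi> 1) \<bullet> \<phi> K \<noteq> 0"
  shows "\<exists>Tstar>0. \<forall>T. 0 < T \<and> T < Tstar \<longrightarrow>
           (\<forall>s::real \<Rightarrow> real. set_borel_measurable lborel {0..T} s \<and>
               set_integrable lborel {0..T} (\<lambda>t. (s t)^2) \<longrightarrow>
             - sgn ((commut H1 (commut H0 H1) *v \<phi> 1) \<bullet> \<phi> K) * Qform H0 H1 \<phi> lam K T s
               \<ge> \<bar>(commut H1 (commut H0 H1) *v \<phi> 1) \<bullet> \<phi> K\<bar> / 8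
                   * (LINT t:{0..T}|lborel. (s t)^2))"
proof -
  define a where "a = (commut H1 (commut H0 H1) *v \<phi> 1) \<bullet> \<phi> K"
  define B where "B = commut H0 H1"
  define c where "c = (\<lambda>j. ((B *v \<phi> 1) \<bullet> \<phi> j) * ((B *v \<phi> j) \<bullet> \<phi> K))"
  define C where "C = (\<Sum>j=1..CARD('n). \<bar>c j\<bar>)"
  define w where "w = lam K - lam 1"
  have a0: "a \<noteq> 0" using a_nz a_def by simp
  have C0: "0 \<le> C" unfolding C_def by (simp add: sum_nonneg)
  define Ts where "Ts = min (1/(\<bar>w\<bar>+1)) (\<bar>a\<bar>/(8*(C+1)))"
  have Ts: "Ts > 0" unfolding Ts_def using a0 C0 by simp
  show ?thesis
  proof (intro exI[of _ Ts] conjI Ts allI impI)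
    fix T :: real and s :: "real \<Rightarrow> real"
    assume T: "0 < T \<and> T < Ts"
    assume hs: "set_borel_measurable lborel {0..T} s \<and> set_integrable lborel {0..T} (\<lambda>t. (s t)^2)"
    have T0: "0 < T" using T by simp
    note ctx = T0 conjunct1[OF hs] conjunct2[OF hs]
    define S where "S = (LINT t:{0..T}|lborel. (s t)^2)"
    have S0: "0 \<le> S" unfolding S_def by (rule lint_nonneg) simp
    define X where "X = (LINT t:{0..T}|lborel. (s t)^2 * cos (w * (t - T)))"
    define I where "I = (\<lambda>j. LINT t:{0..T}|lborel. s t * (LINT \<tau>:{0..t}|lborel.
               s \<tau> * sin (lam j * (\<tau> - t) + lam K * (t - T) + lam 1 * (T - \<tau>))))"
    have wT: "\<bar>w\<bar> * T \<le> 1"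
    proof -
      have "T \<le> 1/(\<bar>w\<bar>+1)" using T Ts_def by simp
      then have "T * (\<bar>w\<bar>+1) \<le> 1" by (simp add: field_simps)
      then show ?thesis using T0 by (simp add: algebra_simps)
    qed
    have X: "S / 2 \<le> X" unfolding S_def X_def by (rule cos_part[OF ctx wT])
    have Ib: "\<bar>I j\<bar> \<le> T * S" for j
      unfolding I_def S_def
      by (rule outer_bound[OF ctx]) (rule inner_bound[OF ctx])
    have CT: "C * T \<le> \<bar>a\<bar> / 8"
    proof -
      have "T \<le> \<bar>a\<bar>/(8*(C+1))" using T Ts_def by simp
      then have "C * T \<le> C * (\<bar>a\<bar>/(8*(C+1)))" using C0 by (rule mult_left_mono)
      also have "\<dots> \<le> \<bar>a\<bar>/8"
        using C0 by (simp add: field_simps)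
      finally show ?thesis .
    qed
    have sumb: "\<bar>\<Sum>j=1..CARD('n). c j * I j\<bar> \<le> \<bar>a\<bar>/8 * S"
    proof -
      have "\<bar>\<Sum>j=1..CARD('n). c j * I j\<bar> \<le> (\<Sum>j=1..CARD('n). \<bar>c j\<bar> * (T * S))"
        by (rule order_trans[OF sum_abs]) (auto intro!: sum_mono simp: abs_mult Ib mult_left_mono)
      also have "\<dots> = (C * T) * S" unfolding C_def by (simp add: sum_distrib_right mult.assoc)
      also have "\<dots> \<le> \<bar>a\<bar>/8 * S" using CT S0 by (rule mult_right_mono)
      finally show ?thesis .
    qed
    have Q: "Qform H0 H1 \<phi> lam K T s = - (a/2) * X + (\<Sum>j=1..CARD('n). c j * I j)"
      unfolding Qform_def Let_def a_def B_def c_def X_def I_def w_def by simp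
    have main: "- sgn a * Qform H0 H1 \<phi> lam K T s \<ge> \<bar>a\<bar> / 8 * S"
    proof -
      define Sg where "Sg = (\<Sum>j=1..CARD('n). c j * I j)"
      have h2: "- (\<bar>a\<bar>/8*S) \<le> Sg" "Sg \<le> \<bar>a\<bar>/8*S" using sumb unfolding Sg_def by (simp_all add: abs_le_iff)
      show ?thesis
      proof (cases "a > 0")
        case True
        have h1: "a * (S/2) \<le> a * X" using X True by (intro mult_left_mono) auto
        have e: "- sgn a * Qform H0 H1 \<phi> lam K T s = a/2*X - Sg" using True unfolding Q Sg_def by simp
        show ?thesis unfolding e using h1 h2 abs_of_pos[OF True] by linarith
      next
        case False
        then have an: "a < 0" using a0 by simp
        have h1: "(-a) * (S/2) \<le> (-a) * X" using X an by (intro mult_left_mono) auto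
        have e: "- sgn a * Qform H0 H1 \<phi> lam K T s = (-a)/2*X + Sg" using an unfolding Q Sg_def by simp
        show ?thesis unfolding e using h1 h2 abs_of_neg[OF an] by (simp only:)
      qed
    qed
    then show "- sgn ((commut H1 (commut H0 H1) *v \<phi> 1) \<bullet> \<phi> K) * Qform H0 H1 \<phi> lam K T s
               \<ge> \<bar>(commut H1 (commut H0 H1) *v \<phi> 1) \<bullet> \<phi> K\<bar> / 8
                   * (LINT t:{0..T}|lborel. (s t)^2)"
      unfolding a_def S_def .
  qed
qed

end
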